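(* Let $G$ be a group with an involution $\theta$, $H=G^\theta$, let $Q\subseteq G$ be a subgroup and $x\in G$. Then there is a canonical bijection \[ \iota_Q^{-1}\big(\iota_Q(QxH)\big)\ \longleftrightarrow\ \ker\Big(H^1(\langle x.\theta\rangle, Q(x))\longrightarrow H^1(\langle x.\theta\rangle, G)\Big), \] where $Q(x):=Q\cap x.\theta(Q)$ and the map is induced by the inclusion $Q(x)\subseteq G$.
   Context: $\iota(g)=g\theta(g)^{-1}$ and $\iota_Q:Q\backslash G/H\to Q\backslash G/\theta(Q)$ is the induced map on double cosets. $x.\theta:=\operatorname{int}_x\circ\theta\circ\operatorname{int}_{x^{-1}}$ (an involution, which preserves $Q(x)$), where $\operatorname{int}_g(y)=gyg^{-1}$. For a group $A$ with involution $\sigma$, $Z^1(\sigma,A)=\{a\in A:\sigma(a)=a^{-1}\}$, $A$ acts on it by $g.a=ga\sigma(g)^{-1}$, and $H^1(\langle\sigma\rangle,A):=Z^1(\sigma,A)/A$, a pointed set with base point the class of $e$; the kernel of a map of pointed sets is the preimage of the base point. *)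

theory Defs
  imports "HOL-Algebra.Group"
begin

definition iota :: "('a, 'b) monoid_scheme \<Rightarrow> ('a \<Rightarrow> 'a) \<Rightarrow> 'a \<Rightarrow> 'a" where
  "iota G \<theta> g = g \<otimes>\<^bsub>G\<^esub> inv\<^bsub>G\<^esub> (\<theta> g)"

definition fixgroup :: "('a, 'b) monoid_scheme \<Rightarrow> ('a \<Rightarrow> 'a) \<Rightarrow> 'a set" where
  "fixgroup G \<theta> = {g \<in> carrier G. \<theta> g = g}"

definition dcoset :: "('a, 'b) monoid_scheme \<Rightarrow> 'a set \<Rightarrow> 'a \<Rightarrow> 'a set \<Rightarrow> 'a set" where
  "dcoset G A g B = {a \<otimes>\<^bsub>G\<^esub> g \<otimes>\<^bsub>G\<^esub> b | a b. a \<in> A \<and> b \<in> B}"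

definition dcosets :: "('a, 'b) monoid_scheme \<Rightarrow> 'a set \<Rightarrow> 'a set \<Rightarrow> 'a set set" where
  "dcosets G A B = {dcoset G A g B | g. g \<in> carrier G}"

text \<open>iota_Q : Q\G/H -> Q\G/theta(Q), QgH |-> Q iota(g) theta(Q)
  (evaluated at an arbitrary representative; well defined).\<close>
definition iotaQ :: "('a, 'b) monoid_scheme \<Rightarrow> ('a \<Rightarrow> 'a) \<Rightarrow> 'a set \<Rightarrow> 'a set \<Rightarrow> 'a set" where
  "iotaQ G \<theta> Q D = dcoset G Q (iota G \<theta> (SOME g. g \<in> D)) (\<theta> ` Q)"

definition xtheta :: "('a, 'b) monoid_scheme \<Rightarrow> ('a \<Rightarrow> 'a) \<Rightarrow> 'a \<Rightarrow> 'a \<Rightarrow> 'a" where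
  "xtheta G \<theta> x = (\<lambda>y. x \<otimes>\<^bsub>G\<^esub> \<theta> (inv\<^bsub>G\<^esub> x \<otimes>\<^bsub>G\<^esub> y \<otimes>\<^bsub>G\<^esub> x) \<otimes>\<^bsub>G\<^esub> inv\<^bsub>G\<^esub> x)"

definition Qx :: "('a, 'b) monoid_scheme \<Rightarrow> ('a \<Rightarrow> 'a) \<Rightarrow> 'a set \<Rightarrow> 'a \<Rightarrow> 'a set" where
  "Qx G \<theta> Q x = Q \<inter> xtheta G \<theta> x ` Q"

definition Z1 :: "('a, 'b) monoid_scheme \<Rightarrow> ('a \<Rightarrow> 'a) \<Rightarrow> 'a set \<Rightarrow> 'a set" where
  "Z1 G \<sigma> A = {a \<in> A. \<sigma> a = inv\<^bsub>G\<^esub> a}"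

definition h1class :: "('a, 'b) monoid_scheme \<Rightarrow> ('a \<Rightarrow> 'a) \<Rightarrow> 'a set \<Rightarrow> 'a \<Rightarrow> 'a set" where
  "h1class G \<sigma> A a = {g \<otimes>\<^bsub>G\<^esub> a \<otimes>\<^bsub>G\<^esub> inv\<^bsub>G\<^esub> (\<sigma> g) | g. g \<in> A}"

definition H1 :: "('a, 'b) monoid_scheme \<Rightarrow> ('a \<Rightarrow> 'a) \<Rightarrow> 'a set \<Rightarrow> 'a set set" where
  "H1 G \<sigma> A = h1class G \<sigma> A ` Z1 G \<sigma> A"

text \<open>Map H^1(sigma, A) -> H^1(sigma, B) induced by inclusion A \<subseteq> B
  (evaluated at an arbitrary representative; well defined).\<close>
definition H1map :: "('a, 'b) monoid_scheme \<Rightarrow> ('a \<Rightarrow> 'a) \<Rightarrow> 'a set \<Rightarrow> 'a set \<Rightarrow> 'a set" where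
  "H1map G \<sigma> B c = h1class G \<sigma> B (SOME a. a \<in> c)"

definition H1ker :: "('a, 'b) monoid_scheme \<Rightarrow> ('a \<Rightarrow> 'a) \<Rightarrow> 'a set \<Rightarrow> 'a set \<Rightarrow> 'a set set" where
  "H1ker G \<sigma> A B = {c \<in> H1 G \<sigma> A. H1map G \<sigma> B c = h1class G \<sigma> B \<one>\<^bsub>G\<^esub>}"

end

theory Submission imports Defs begin

lemma (in group) ca1: "x \<in> carrier G \<Longrightarrow> y \<in> carrier G \<Longrightarrow> x \<otimes> (inv x \<otimes> y) = y"
  by (simp add: m_assoc[symmetric])
lemma (in group) ca2: "x \<in> carrier G \<Longrightarrow> y \<in> carrier G \<Longrightarrow> inv x \<otimes> (x \<otimes> y) = y"
  by (simp add: m_assoc[symmetric])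

lemmas (in group) gs = m_assoc inv_mult_group ca1 ca2

locale invol = group G for G (structure) +
  fixes \<theta> assumes hom: "\<theta> \<in> hom G G" and invo: "\<And>g. g \<in> carrier G \<Longrightarrow> \<theta> (\<theta> g) = g"
begin

lemma gh: "group_hom G G \<theta>"
  using hom by (simp add: group_hom_def group_hom_axioms_def is_group)

lemma th_closed[simp]: "g \<in> carrier G \<Longrightarrow> \<theta> g \<in> carrier G"
  using group_hom.hom_closed[OF gh] by blast
lemma th_mult[simp]: "a \<in> carrier G \<Longrightarrow> b \<in> carrier G \<Longrightarrow> \<theta> (a \<otimes> b) = \<theta> a \<otimes> \<theta> b"
  using group_hom.hom_mult[OF gh] by blast
lemma th_one[simp]: "\<theta> \<one> = \<one>"
  using group_hom.hom_one[OF gh] by blast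
lemma th_inv[simp]: "a \<in> carrier G \<Longrightarrow> \<theta> (inv a) = inv (\<theta> a)"
  using group_hom.hom_inv[OF gh] by blast

lemma iota_closed[simp]: "g \<in> carrier G \<Longrightarrow> iota G \<theta> g \<in> carrier G"
  by (simp add: iota_def)

lemma th_iota: "y \<in> carrier G \<Longrightarrow> \<theta> (iota G \<theta> y) = inv (iota G \<theta> y)"
  by (simp add: iota_def invo gs)

lemma iota_mult: "q \<in> carrier G \<Longrightarrow> y \<in> carrier G \<Longrightarrow>
   iota G \<theta> (q \<otimes> y) = q \<otimes> iota G \<theta> y \<otimes> inv (\<theta> q)"
  by (simp add: iota_def gs)

lemma fix_sub: "subgroup (fixgroup G \<theta>) G"
  by (rule subgroupI) (auto simp: fixgroup_def)

lemma iota_H: "y \<in> carrier G \<Longrightarrow> h \<in> fixgroup G \<theta> \<Longrightarrow> iota G \<theta> (y \<otimes> h) = iota G \<theta> y"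
  by (auto simp: iota_def fixgroup_def gs)

lemma iota_eq: "u \<in> carrier G \<Longrightarrow> v \<in> carrier G \<Longrightarrow> iota G \<theta> u = iota G \<theta> v \<Longrightarrow> inv v \<otimes> u \<in> fixgroup G \<theta>"
proof -
  assume u: "u \<in> carrier G" and v: "v \<in> carrier G" and e: "iota G \<theta> u = iota G \<theta> v"
  have "inv v \<otimes> (iota G \<theta> u) \<otimes> \<theta> u = inv v \<otimes> (iota G \<theta> v) \<otimes> \<theta> u" using e by simp
  hence "inv v \<otimes> u = inv (\<theta> v) \<otimes> \<theta> u" using u v by (simp add: iota_def gs)
  hence "\<theta> (inv v \<otimes> u) = inv v \<otimes> u" using u v by (simp add: invo)
  thus ?thesis using u v by (simp add: fixgroup_def)
qed

lemma img_sub: "subgroup Q G \<Longrightarrow> subgroup (\<theta> ` Q) G"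
  using group_hom.subgroup_img_is_subgroup[OF gh] by blast

lemma img_img: assumes "subgroup Q G" shows "\<theta> ` \<theta> ` Q = Q"
proof -
  have h: "\<And>q. q \<in> Q \<Longrightarrow> \<theta> (\<theta> q) = q" using invo subgroup.mem_carrier[OF assms] by simp
  have "\<theta> ` \<theta> ` Q = (\<lambda>q. \<theta> (\<theta> q)) ` Q" by (simp add: image_image)
  also have "... = id ` Q" by (rule image_cong[OF refl]) (simp add: h)
  finally show ?thesis by simp
qed

end

lemma sub_Int: "subgroup A G \<Longrightarrow> subgroup B G \<Longrightarrow> subgroup (A \<inter> B) G"
  by (auto simp: subgroup_def)


context invol begin

lemma orb_sub: "subgroup A G \<Longrightarrow> a \<in> carrier G \<Longrightarrow> h1class G \<theta> A a \<subseteq> carrier G"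
  by (auto simp: h1class_def dest: subgroup.mem_carrier)

lemma orb_self: "subgroup A G \<Longrightarrow> a \<in> carrier G \<Longrightarrow> a \<in> h1class G \<theta> A a"
  unfolding h1class_def
  by (rule CollectI, rule exI[where x="\<one>"]) (simp add: subgroup.one_closed)

lemma orb_trans:
  assumes A: "subgroup A G" and st: "\<theta> ` A \<subseteq> A" and a: "a \<in> carrier G"
    and b: "b \<in> h1class G \<theta> A a"
  shows "h1class G \<theta> A b = h1class G \<theta> A a"
proof -
  obtain g where g: "g \<in> A" and bg: "b = g \<otimes> a \<otimes> inv (\<theta> g)" using b by (auto simp: h1class_def)
  have gc: "g \<in> carrier G" using subgroup.mem_carrier[OF A g] by blast
  show ?thesis
  proof
    show "h1class G \<theta> A b \<subseteq> h1class G \<theta> A a"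
    proof
      fix z assume "z \<in> h1class G \<theta> A b"
      then obtain k where k: "k \<in> A" and z: "z = k \<otimes> b \<otimes> inv (\<theta> k)" by (auto simp: h1class_def)
      have kc: "k \<in> carrier G" using subgroup.mem_carrier[OF A k] by blast
      have "z = (k \<otimes> g) \<otimes> a \<otimes> inv (\<theta> (k \<otimes> g))" using z bg kc gc a by (simp add: gs)
      moreover have "k \<otimes> g \<in> A" using subgroup.m_closed[OF A k g] by blast
      ultimately show "z \<in> h1class G \<theta> A a" by (auto simp: h1class_def)
    qed
  next
    show "h1class G \<theta> A a \<subseteq> h1class G \<theta> A b"
    proof
      fix z assume "z \<in> h1class G \<theta> A a"
      then obtain k where k: "k \<in> A" and z: "z = k \<otimes> a \<otimes> inv (\<theta> k)" by (auto simp: h1class_def)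
      have kc: "k \<in> carrier G" using subgroup.mem_carrier[OF A k] by blast
      have "z = (k \<otimes> inv g) \<otimes> b \<otimes> inv (\<theta> (k \<otimes> inv g))" using z bg kc gc a by (simp add: gs)
      moreover have "k \<otimes> inv g \<in> A" using subgroup.m_closed[OF A k subgroup.m_inv_closed[OF A g]] by blast
      ultimately show "z \<in> h1class G \<theta> A b" by (auto simp: h1class_def)
    qed
  qed
qed

lemma orb_triv: "k \<in> carrier G \<Longrightarrow> h1class G \<theta> (carrier G) (k \<otimes> inv (\<theta> k)) = h1class G \<theta> (carrier G) \<one>"
proof -
  assume k: "k \<in> carrier G"
  have "k \<otimes> inv (\<theta> k) = k \<otimes> \<one> \<otimes> inv (\<theta> k)" using k by simp
  hence m: "k \<otimes> inv (\<theta> k) \<in> h1class G \<theta> (carrier G) \<one>" using k unfolding h1class_def by blast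
  show ?thesis by (rule orb_trans[OF subgroup_self _ one_closed m]) auto
qed

end

lemma (in group) dc_mem: "a \<in> A \<Longrightarrow> b \<in> B \<Longrightarrow> a \<otimes> g \<otimes> b \<in> dcoset G A g B"
  by (auto simp: dcoset_def)

lemma (in group) dc_self: "subgroup A G \<Longrightarrow> subgroup B G \<Longrightarrow> g \<in> carrier G \<Longrightarrow> g \<in> dcoset G A g B"
  using dc_mem[of \<one> A \<one> B g] by (simp add: subgroup.one_closed)

lemma (in group) dc_sub: "subgroup A G \<Longrightarrow> subgroup B G \<Longrightarrow> g \<in> carrier G \<Longrightarrow> dcoset G A g B \<subseteq> carrier G"
  by (auto simp: dcoset_def dest: subgroup.mem_carrier)

lemma (in group) dc_trans:
  assumes A: "subgroup A G" and B: "subgroup B G" and g: "g \<in> carrier G" and z: "z \<in> dcoset G A g B"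
  shows "dcoset G A z B = dcoset G A g B"
proof -
  obtain a b where a: "a \<in> A" and b: "b \<in> B" and zz: "z = a \<otimes> g \<otimes> b" using z by (auto simp: dcoset_def)
  have ac: "a \<in> carrier G" using subgroup.mem_carrier[OF A a] by blast
  have bc: "b \<in> carrier G" using subgroup.mem_carrier[OF B b] by blast
  show ?thesis
  proof
    show "dcoset G A z B \<subseteq> dcoset G A g B"
    proof
      fix w assume "w \<in> dcoset G A z B"
      then obtain a' b' where a': "a' \<in> A" and b': "b' \<in> B" and w: "w = a' \<otimes> z \<otimes> b'" by (auto simp: dcoset_def)
      have "a' \<in> carrier G" "b' \<in> carrier G" using subgroup.mem_carrier[OF A a'] subgroup.mem_carrier[OF B b'] by blast+
      hence "w = (a' \<otimes> a) \<otimes> g \<otimes> (b \<otimes> b')" using w zz ac bc g by (simp add: gs)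
      thus "w \<in> dcoset G A g B" using dc_mem[OF subgroup.m_closed[OF A a' a] subgroup.m_closed[OF B b b']] by simp
    qed
  next
    show "dcoset G A g B \<subseteq> dcoset G A z B"
    proof
      fix w assume "w \<in> dcoset G A g B"
      then obtain a' b' where a': "a' \<in> A" and b': "b' \<in> B" and w: "w = a' \<otimes> g \<otimes> b'" by (auto simp: dcoset_def)
      have "a' \<in> carrier G" "b' \<in> carrier G" using subgroup.mem_carrier[OF A a'] subgroup.mem_carrier[OF B b'] by blast+
      hence "w = (a' \<otimes> inv a) \<otimes> z \<otimes> (inv b \<otimes> b')" using w zz ac bc g by (simp add: gs)
      thus "w \<in> dcoset G A z B" using dc_mem[OF subgroup.m_closed[OF A a' subgroup.m_inv_closed[OF A a]] subgroup.m_closed[OF B subgroup.m_inv_closed[OF B b] b']] by simp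
    qed
  qed
qed

lemma (in group) dcs_rep:
  assumes A: "subgroup A G" and B: "subgroup B G" and D: "D \<in> dcosets G A B" and y: "y \<in> D"
  shows "D = dcoset G A y B" "y \<in> carrier G"
proof -
  obtain g where g: "g \<in> carrier G" and Dg: "D = dcoset G A g B" using D by (auto simp: dcosets_def)
  show "D = dcoset G A y B" using dc_trans[OF A B g] y Dg by simp
  show "y \<in> carrier G" using dc_sub[OF A B g] y Dg by blast
qed

context invol begin

lemma sig_eq: "x \<in> carrier G \<Longrightarrow> y \<in> carrier G \<Longrightarrow>
  xtheta G \<theta> x y = iota G \<theta> x \<otimes> \<theta> y \<otimes> inv (iota G \<theta> x)"
  by (simp add: xtheta_def iota_def gs invo)

lemma sig_invol: assumes x: "x \<in> carrier G" shows "invol G (xtheta G \<theta> x)"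
proof
  show "xtheta G \<theta> x \<in> hom G G"
    unfolding hom_def using x by (auto simp: sig_eq gs)
  fix g assume g: "g \<in> carrier G"
  show "xtheta G \<theta> x (xtheta G \<theta> x g) = g"
    using x g by (simp add: sig_eq th_iota gs invo)
qed

end


context invol begin

lemma main:
  assumes QS: "subgroup Q G" and x: "x \<in> carrier G"
  defines "H \<equiv> fixgroup G \<theta>" and "\<sigma> \<equiv> xtheta G \<theta> x" and "A \<equiv> Qx G \<theta> Q x"
    and "ix \<equiv> iota G \<theta> x"
  shows "\<exists>\<Phi>. bij_betw \<Phi>
            {D \<in> dcosets G Q H. iotaQ G \<theta> Q D = iotaQ G \<theta> Q (dcoset G Q x H)}
            (H1ker G \<sigma> A (carrier G))
         \<and> (\<forall>D \<in> dcosets G Q H. \<forall>y \<in> D.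
               iotaQ G \<theta> Q D = iotaQ G \<theta> Q (dcoset G Q x H) \<longrightarrow>
               iota G \<theta> y \<otimes> inv ix \<in> A \<longrightarrow>
               \<Phi> D = h1class G \<sigma> A (iota G \<theta> y \<otimes> inv ix))"
proof -
  interpret S: invol G \<sigma> unfolding \<sigma>_def by (rule sig_invol[OF x])
  have ixc: "ix \<in> carrier G" using x by (simp add: ix_def)
  have sg: "\<sigma> y = ix \<otimes> \<theta> y \<otimes> inv ix" if "y \<in> carrier G" for y
    using sig_eq[OF x that] by (simp add: \<sigma>_def ix_def)
  have HS: "subgroup H G" unfolding H_def by (rule fix_sub)
  have TQ: "subgroup (\<theta> ` Q) G" by (rule img_sub[OF QS])
  have Aeq: "A = Q \<inter> \<sigma> ` Q" by (simp add: A_def Qx_def \<sigma>_def)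
  have AS: "subgroup A G" unfolding Aeq by (rule sub_Int[OF QS S.img_sub[OF QS]])
  have Ast: "\<sigma> ` A \<subseteq> A" unfolding Aeq using S.img_img[OF QS] by blast
  have Qc: "q \<in> carrier G" if "q \<in> Q" for q using subgroup.mem_carrier[OF QS that] .
  have Ac: "q \<in> carrier G" if "q \<in> A" for q using subgroup.mem_carrier[OF AS that] .
  have AQ: "A \<subseteq> Q" unfolding Aeq by blast
  have cocy: "\<sigma> (iota G \<theta> y \<otimes> inv ix) = inv (iota G \<theta> y \<otimes> inv ix)" if "y \<in> carrier G" for y
    using that ixc x by (simp add: sg th_iota gs ix_def)
  have cob: "iota G \<theta> y \<otimes> inv ix = (y \<otimes> inv x) \<otimes> inv (\<sigma> (y \<otimes> inv x))" if "y \<in> carrier G" for y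
    using that x by (simp add: sg iota_def ix_def gs invo)
  have iQ: "iotaQ G \<theta> Q D = dcoset G Q (iota G \<theta> y) (\<theta> ` Q)" if D: "D \<in> dcosets G Q H" and y: "y \<in> D" for D y
  proof -
    define g0 where "g0 = (SOME g. g \<in> D)"
    have g0: "g0 \<in> D" unfolding g0_def using y by (rule someI)
    have yc: "y \<in> carrier G" and Dy: "D = dcoset G Q y H" using dcs_rep[OF QS HS D y] by auto
    obtain q h where q: "q \<in> Q" and h: "h \<in> H" and gq: "g0 = q \<otimes> y \<otimes> h"
      using g0 Dy by (auto simp: dcoset_def)
    have hc: "h \<in> carrier G" using subgroup.mem_carrier[OF HS h] .
    have "iota G \<theta> g0 = q \<otimes> iota G \<theta> y \<otimes> \<theta> (inv q)"
      using gq yc hc Qc[OF q] h iota_H[of "q \<otimes> y" h] iota_mult[of q y] by (simp add: H_def)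
    moreover have "\<theta> (inv q) \<in> \<theta> ` Q" using subgroup.m_inv_closed[OF QS q] by blast
    ultimately have "iota G \<theta> g0 \<in> dcoset G Q (iota G \<theta> y) (\<theta> ` Q)" using dc_mem[OF q, of "\<theta> (inv q)" "\<theta> ` Q" "iota G \<theta> y"] by simp
    thus ?thesis unfolding iotaQ_def g0_def[symmetric] using dc_trans[OF QS TQ] yc by simp
  qed
  have D0: "dcoset G Q x H \<in> dcosets G Q H" "x \<in> dcoset G Q x H"
    using x dc_self[OF QS HS x] by (auto simp: dcosets_def)
  have cond: "(iotaQ G \<theta> Q D = iotaQ G \<theta> Q (dcoset G Q x H)) \<longleftrightarrow> iota G \<theta> y \<in> dcoset G Q ix (\<theta> ` Q)"
    if D: "D \<in> dcosets G Q H" and y: "y \<in> D" for D y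
  proof -
    have yc: "y \<in> carrier G" using dcs_rep[OF QS HS D y] by auto
    show ?thesis
      unfolding iQ[OF D y] iQ[OF D0] ix_def[symmetric]
      using dc_trans[OF QS TQ ixc, of "iota G \<theta> y"] dc_self[OF QS TQ iota_closed[OF yc]] by auto
  qed
  define P where "P D y \<longleftrightarrow> y \<in> D \<and> iota G \<theta> y \<otimes> inv ix \<in> A" for D y
  define \<Phi> where "\<Phi> D = h1class G \<sigma> A (iota G \<theta> (SOME y. P D y) \<otimes> inv ix)" for D
  have wd: "h1class G \<sigma> A (iota G \<theta> y' \<otimes> inv ix) = h1class G \<sigma> A (iota G \<theta> y \<otimes> inv ix)"
    if D: "D \<in> dcosets G Q H" and P1: "P D y" and P2: "P D y'" for D y y'
  proof -
    have y: "y \<in> D" and a: "iota G \<theta> y \<otimes> inv ix \<in> A" using P1 by (auto simp: P_def)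
    have y': "y' \<in> D" and a': "iota G \<theta> y' \<otimes> inv ix \<in> A" using P2 by (auto simp: P_def)
    have yc: "y \<in> carrier G" and Dy: "D = dcoset G Q y H" using dcs_rep[OF QS HS D y] by auto
    obtain q h where q: "q \<in> Q" and h: "h \<in> H" and gq: "y' = q \<otimes> y \<otimes> h"
      using y' Dy by (auto simp: dcoset_def)
    have hc: "h \<in> carrier G" using subgroup.mem_carrier[OF HS h] .
    have qc: "q \<in> carrier G" using Qc[OF q] .
    have "iota G \<theta> y' = q \<otimes> iota G \<theta> y \<otimes> inv (\<theta> q)"
      using gq yc hc qc h iota_H[of "q \<otimes> y" h] iota_mult[of q y] by (simp add: H_def)
    hence e: "iota G \<theta> y' \<otimes> inv ix = q \<otimes> (iota G \<theta> y \<otimes> inv ix) \<otimes> inv (\<sigma> q)"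
      using qc yc ixc by (simp add: sg gs)
    have "inv (\<sigma> q) = inv (iota G \<theta> y \<otimes> inv ix) \<otimes> inv q \<otimes> (iota G \<theta> y' \<otimes> inv ix)"
      unfolding e using qc yc ixc by (simp add: gs)
    moreover have "... \<in> Q" using subgroup.m_closed[OF QS subgroup.m_closed[OF QS subgroup.m_inv_closed[OF QS subsetD[OF AQ a]] subgroup.m_inv_closed[OF QS q]] subsetD[OF AQ a']] .
    ultimately have iq: "inv (\<sigma> q) \<in> Q" by simp
    have "\<sigma> q \<in> Q" using subgroup.m_inv_closed[OF QS iq] qc by simp
    hence "q \<in> \<sigma> ` Q" using S.invo[OF qc] by (metis image_eqI)
    hence qA: "q \<in> A" using q Aeq by blast
    have "iota G \<theta> y' \<otimes> inv ix \<in> h1class G \<sigma> A (iota G \<theta> y \<otimes> inv ix)"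
      unfolding e h1class_def using qA by blast
    thus ?thesis using S.orb_trans[OF AS Ast] a Ac by blast
  qed
  have ex: "\<exists>y. P D y" if D: "D \<in> dcosets G Q H" and c: "iotaQ G \<theta> Q D = iotaQ G \<theta> Q (dcoset G Q x H)" for D
  proof -
    obtain g where gc: "g \<in> carrier G" and Dg: "D = dcoset G Q g H" using D by (auto simp: dcosets_def)
    have gD: "g \<in> D" unfolding Dg by (rule dc_self[OF QS HS gc])
    have "iota G \<theta> g \<in> dcoset G Q ix (\<theta> ` Q)" using cond[OF D gD] c by simp
    then obtain q q' where q: "q \<in> Q" and q': "q' \<in> Q" and ig: "iota G \<theta> g = q \<otimes> ix \<otimes> \<theta> q'"
      by (auto simp: dcoset_def)
    have qc: "q \<in> carrier G" and q'c: "q' \<in> carrier G" using Qc q q' by auto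
    define y where "y = inv q \<otimes> g"
    have yD: "y \<in> D" unfolding y_def Dg
      using dc_mem[of "inv q" Q \<one> H g] subgroup.m_inv_closed[OF QS q] subgroup.one_closed[OF HS] gc qc by simp
    have yc: "y \<in> carrier G" using y_def qc gc by simp
    have "iota G \<theta> y = ix \<otimes> \<theta> (q' \<otimes> q)"
      unfolding y_def using iota_mult[of "inv q" g] ig qc q'c gc ixc by (simp add: gs)
    hence aeq: "iota G \<theta> y \<otimes> inv ix = \<sigma> (q' \<otimes> q)" using qc q'c ixc by (simp add: sg gs)
    have pQ: "q' \<otimes> q \<in> Q" using subgroup.m_closed[OF QS q' q] .
    have pc: "q' \<otimes> q \<in> carrier G" using qc q'c by simp
    have a1: "iota G \<theta> y \<otimes> inv ix \<in> \<sigma> ` Q" using aeq pQ by simp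
    have "inv (iota G \<theta> y \<otimes> inv ix) = q' \<otimes> q"
      using cocy[OF yc] aeq S.invo[OF pc] by simp
    hence iq: "inv (iota G \<theta> y \<otimes> inv ix) \<in> Q" using pQ by simp
    have "iota G \<theta> y \<otimes> inv ix \<in> Q" using subgroup.m_inv_closed[OF QS iq] yc ixc by simp
    with a1 yD show ?thesis unfolding P_def Aeq by blast
  qed
  have Pphi: "P D (SOME y. P D y)" if "D \<in> dcosets G Q H" "iotaQ G \<theta> Q D = iotaQ G \<theta> Q (dcoset G Q x H)" for D
    using ex[OF that] by (rule someI_ex)
  have inK: "h1class G \<sigma> A (iota G \<theta> y \<otimes> inv ix) \<in> H1ker G \<sigma> A (carrier G)"
    if D: "D \<in> dcosets G Q H" and Py: "P D y" for D y
  proof -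
    have yD: "y \<in> D" and aA: "iota G \<theta> y \<otimes> inv ix \<in> A" using Py by (auto simp: P_def)
    have yc: "y \<in> carrier G" using dcs_rep[OF QS HS D yD] by auto
    let ?a = "iota G \<theta> y \<otimes> inv ix"
    have ac: "?a \<in> carrier G" using yc ixc by simp
    have Z: "?a \<in> Z1 G \<sigma> A" using aA cocy[OF yc] by (simp add: Z1_def)
    have H1: "h1class G \<sigma> A ?a \<in> H1 G \<sigma> A" using Z by (simp add: H1_def)
    define b where "b = (SOME b. b \<in> h1class G \<sigma> A ?a)"
    have "b \<in> h1class G \<sigma> A ?a" unfolding b_def using S.orb_self[OF AS ac] by (rule someI)
    then obtain q where q: "q \<in> A" and bq: "b = q \<otimes> ?a \<otimes> inv (\<sigma> q)" by (auto simp: h1class_def)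
    have qc: "q \<in> carrier G" using Ac q by simp
    define k where "k = y \<otimes> inv x"
    have kc: "k \<in> carrier G" using k_def yc x by simp
    have "b = (q \<otimes> k) \<otimes> inv (\<sigma> (q \<otimes> k))"
      unfolding bq cob[OF yc] k_def[symmetric] using qc kc by (simp add: gs)
    hence "h1class G \<sigma> (carrier G) b = h1class G \<sigma> (carrier G) \<one>"
      using S.orb_triv[of "q \<otimes> k"] qc kc by simp
    hence "H1map G \<sigma> (carrier G) (h1class G \<sigma> A ?a) = h1class G \<sigma> (carrier G) \<one>"
      by (simp add: H1map_def b_def)
    with H1 show ?thesis by (simp add: H1ker_def)
  qed
  let ?L = "{D \<in> dcosets G Q H. iotaQ G \<theta> Q D = iotaQ G \<theta> Q (dcoset G Q x H)}"
  let ?K = "H1ker G \<sigma> A (carrier G)"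
  have second: "\<forall>D \<in> dcosets G Q H. \<forall>y \<in> D.
               iotaQ G \<theta> Q D = iotaQ G \<theta> Q (dcoset G Q x H) \<longrightarrow>
               iota G \<theta> y \<otimes> inv ix \<in> A \<longrightarrow>
               \<Phi> D = h1class G \<sigma> A (iota G \<theta> y \<otimes> inv ix)"
  proof (intro ballI impI)
    fix D y assume D: "D \<in> dcosets G Q H" and y: "y \<in> D"
      and c: "iotaQ G \<theta> Q D = iotaQ G \<theta> Q (dcoset G Q x H)" and a: "iota G \<theta> y \<otimes> inv ix \<in> A"
    have Py: "P D y" using y a by (simp add: P_def)
    show "\<Phi> D = h1class G \<sigma> A (iota G \<theta> y \<otimes> inv ix)"
      unfolding \<Phi>_def using wd[OF D Py Pphi[OF D c]] .
  qed
  have img1: "\<Phi> ` ?L \<subseteq> ?K"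
    using inK Pphi unfolding \<Phi>_def by blast
  have img2: "?K \<subseteq> \<Phi> ` ?L"
  proof
    fix c assume cK: "c \<in> ?K"
    then obtain a where aZ: "a \<in> Z1 G \<sigma> A" and ca: "c = h1class G \<sigma> A a"
      and hm: "H1map G \<sigma> (carrier G) c = h1class G \<sigma> (carrier G) \<one>"
      by (auto simp: H1ker_def H1_def)
    have aA: "a \<in> A" using aZ by (simp add: Z1_def)
    have ac: "a \<in> carrier G" using Ac aA by simp
    define b where "b = (SOME b. b \<in> c)"
    have bc': "b \<in> c" unfolding b_def ca using S.orb_self[OF AS ac] by (rule someI)
    then obtain q where q: "q \<in> A" and bq: "b = q \<otimes> a \<otimes> inv (\<sigma> q)" unfolding ca by (auto simp: h1class_def)
    have qc: "q \<in> carrier G" using Ac q by simp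
    have "\<sigma> q \<in> A" using Ast q by blast
    hence bA: "b \<in> A" unfolding bq using subgroup.m_closed[OF AS subgroup.m_closed[OF AS q aA] subgroup.m_inv_closed[OF AS \<open>\<sigma> q \<in> A\<close>]] by simp
    have bc: "b \<in> carrier G" using Ac bA by simp
    have "h1class G \<sigma> (carrier G) b = h1class G \<sigma> (carrier G) \<one>" using hm by (simp add: H1map_def b_def)
    hence "b \<in> h1class G \<sigma> (carrier G) \<one>" using S.orb_self[OF subgroup_self bc] by simp
    then obtain g where gc: "g \<in> carrier G" and bg: "b = g \<otimes> \<one> \<otimes> inv (\<sigma> g)" by (auto simp: h1class_def)
    define y where "y = g \<otimes> x"
    have yc: "y \<in> carrier G" using y_def gc x by simp
    have gy: "y \<otimes> inv x = g" using y_def gc x by (simp add: gs)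
    have ab: "iota G \<theta> y \<otimes> inv ix = b" using cob[OF yc] gy bg gc by simp
    define D where "D = dcoset G Q y H"
    have D: "D \<in> dcosets G Q H" using yc by (auto simp: D_def dcosets_def)
    have yD: "y \<in> D" unfolding D_def by (rule dc_self[OF QS HS yc])
    have "iota G \<theta> y = b \<otimes> ix \<otimes> \<theta> \<one>" using ab[symmetric] yc ixc by (simp add: gs)
    hence "iota G \<theta> y \<in> dcoset G Q ix (\<theta> ` Q)"
      using dc_mem[of b Q "\<theta> \<one>" "\<theta> ` Q" ix] subsetD[OF AQ bA] subgroup.one_closed[OF QS] by force
    hence cD: "iotaQ G \<theta> Q D = iotaQ G \<theta> Q (dcoset G Q x H)" using cond[OF D yD] by simp
    have "\<Phi> D = h1class G \<sigma> A b" using second D yD cD ab bA by metis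
    also have "... = c" unfolding ca using S.orb_trans[OF AS Ast ac] bc' ca by simp
    finally show "c \<in> \<Phi> ` ?L" using D cD by blast
  qed
  have inj: "inj_on \<Phi> ?L"
  proof
    fix D D' assume D1: "D \<in> ?L" and D2: "D' \<in> ?L" and e: "\<Phi> D = \<Phi> D'"
    define y where "y = (SOME y. P D y)"
    define y' where "y' = (SOME y. P D' y)"
    have P1: "P D y" using Pphi D1 y_def by simp
    have P2: "P D' y'" using Pphi D2 y'_def by simp
    have yD: "y \<in> D" and aA: "iota G \<theta> y \<otimes> inv ix \<in> A" using P1 by (auto simp: P_def)
    have yD': "y' \<in> D'" and aA': "iota G \<theta> y' \<otimes> inv ix \<in> A" using P2 by (auto simp: P_def)
    have yc: "y \<in> carrier G" and Dy: "D = dcoset G Q y H" using dcs_rep[OF QS HS _ yD] D1 by auto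
    have yc': "y' \<in> carrier G" and Dy': "D' = dcoset G Q y' H" using dcs_rep[OF QS HS _ yD'] D2 by auto
    have ee: "h1class G \<sigma> A (iota G \<theta> y \<otimes> inv ix) = h1class G \<sigma> A (iota G \<theta> y' \<otimes> inv ix)"
      using e unfolding \<Phi>_def y_def y'_def .
    have "iota G \<theta> y' \<otimes> inv ix \<in> h1class G \<sigma> A (iota G \<theta> y \<otimes> inv ix)"
      unfolding ee using S.orb_self[OF AS] yc' ixc by simp
    then obtain q where q: "q \<in> A" and bq: "iota G \<theta> y' \<otimes> inv ix = q \<otimes> (iota G \<theta> y \<otimes> inv ix) \<otimes> inv (\<sigma> q)"
      by (auto simp: h1class_def)
    have qc: "q \<in> carrier G" using Ac q by simp
    have "iota G \<theta> y' = (iota G \<theta> y' \<otimes> inv ix) \<otimes> ix" using yc' ixc by (simp add: gs)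
    also have "... = iota G \<theta> (q \<otimes> y)" unfolding bq using qc yc ixc
      by (simp add: sg gs iota_mult)
    finally have "inv (q \<otimes> y) \<otimes> y' \<in> H" using iota_eq[of y' "q \<otimes> y"] yc' qc yc by (simp add: H_def)
    then obtain h where h: "h \<in> H" and hh: "h = inv (q \<otimes> y) \<otimes> y'" by blast
    have "y' = q \<otimes> y \<otimes> h" using hh qc yc yc' by (simp add: gs)
    hence y'D: "y' \<in> D" unfolding Dy using dc_mem[of q Q h H y] q AQ h by blast
    have D1': "D \<in> dcosets G Q H" using D1 by simp
    have "D = dcoset G Q y' H" using dcs_rep(1)[OF QS HS D1' y'D] .
    thus "D = D'" using Dy' by simp
  qed
  show ?thesis using inj img1 img2 second unfolding bij_betw_def by blast
qed

end

theorem mainTheorem10: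
  fixes G (structure) and \<theta> :: "'a \<Rightarrow> 'a" and Q :: "'a set" and x :: 'a
  assumes "group G"
    and "\<theta> \<in> hom G G"
    and "\<forall>g \<in> carrier G. \<theta> (\<theta> g) = g"
    and "subgroup Q G"
    and "x \<in> carrier G"
  shows "\<exists>\<Phi>. bij_betw \<Phi>
            {D \<in> dcosets G Q (fixgroup G \<theta>).
               iotaQ G \<theta> Q D = iotaQ G \<theta> Q (dcoset G Q x (fixgroup G \<theta>))}
            (H1ker G (xtheta G \<theta> x) (Qx G \<theta> Q x) (carrier G))
         \<and> (\<forall>D \<in> dcosets G Q (fixgroup G \<theta>). \<forall>y \<in> D.
               iotaQ G \<theta> Q D = iotaQ G \<theta> Q (dcoset G Q x (fixgroup G \<theta>)) \<longrightarrow>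
               iota G \<theta> y \<otimes> inv (iota G \<theta> x) \<in> Qx G \<theta> Q x \<longrightarrow>
               \<Phi> D = h1class G (xtheta G \<theta> x) (Qx G \<theta> Q x)
                        (iota G \<theta> y \<otimes> inv (iota G \<theta> x)))"
proof -
  interpret invol G \<theta> using assms(1,2,3) by (simp add: invol_def invol_axioms_def)
  show ?thesis using main[OF assms(4,5)] by simp
qed

end
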